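(* The classes AsLimSup and PosLimInf are not closed under complement: there is an automaton $A$ in AsLimSup (over $\Sigma=\{a,b\}$) such that no automaton $B$ in AsLimSup satisfies $L_B=1-L_A$, and there is an automaton $A'$ in PosLimInf such that no automaton $B'$ in PosLimInf satisfies $L_{B'}=1-L_{A'}$.
   Context: A probabilistic weighted automaton over a finite alphabet $\Sigma$ is a tuple $A=(Q,\rho_I,\Sigma,\delta,\gamma)$ where $Q$ is a finite set of states, $\rho_I$ is a probability distribution on $Q$, $\delta:Q\times\Sigma\to\mathcal D(Q)$ assigns to each state and letter a probability distribution on $Q$, and $\gamma:Q\times\Sigma\times Q\to\mathbb Q$ is a weight function. A run over an infinite word $w=\sigma_1\sigma_2\dots$ is a sequence $r=q_0\sigma_1q_1\sigma_2\dots$ with $\rho_I(q_0)>0$ and $\delta(q_i,\sigma_{i+1})(q_{i+1})>0$ for all $i$; its weight sequence is $\gamma(r)=v_0v_1\dots$ with $v_i=\gamma(q_i,\sigma_{i+1},q_{i+1})$. For each $w$, the probabilities of finite run prefixes induce a probability measure $\mathbb P^A$ on runs over $w$. For a value function $\mathrm{Val}$, positive semantics: $L^{>0}_A(w)=\sup\{\eta\mid \mathbb P^A(\{r:\mathrm{Val}(\gamma(r))\ge\eta\})>0\}$; almost-sure semantics: $L^{=1}_A(w)=\sup\{\eta\mid \mathbb P^A(\{r:\mathrm{Val}(\gamma(r))\ge\eta\})=1\}$. $\mathsf{LimSup}(v)=\limsup_n v_n$, $\mathsf{LimInf}(v)=\liminf_n v_n$. AsLimSup is the class of $\mathsf{LimSup}$-automata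 under almost-sure semantics; PosLimInf is the class of $\mathsf{LimInf}$-automata under positive semantics. The complement of a quantitative language $L$ is $1-L$. *)

theory Defs
  imports "HOL-Probability.Probability"
begin

datatype ab = a | b

lemma UNIV_ab: "(UNIV :: ab set) = {a, b}"
  using ab.exhaust by auto

instance ab :: finite
  by standard (simp add: UNIV_ab)

text \<open>Probabilistic weighted automaton with states drawn from nat (so that
  automata with arbitrary finite state sets can be quantified over inside a formula).\<close>
record 's pwa =
  states :: "nat set"
  init   :: "nat pmf"
  trans  :: "nat \<Rightarrow> 's \<Rightarrow> nat pmf"
  weight :: "nat \<Rightarrow> 's \<Rightarrow> nat \<Rightarrow> rat"

definition wf_pwa :: "('s::finite) pwa \<Rightarrow> bool" where
  "wf_pwa A \<longleftrightarrow> finite (states A) \<and> set_pmf (init A) \<subseteq> states A \<and>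
     (\<forall>q\<in>states A. \<forall>\<sigma>. set_pmf (trans A q \<sigma>) \<subseteq> states A)"

definition run_space :: "(nat \<Rightarrow> nat) measure" where
  "run_space = PiM UNIV (\<lambda>_. count_space UNIV)"

text \<open>The probability measure on runs over the infinite word w (w i is the letter
  sigma_(i+1)), determined by the probabilities of finite run prefixes.\<close>
definition run_measure :: "'s pwa \<Rightarrow> (nat \<Rightarrow> 's) \<Rightarrow> (nat \<Rightarrow> nat) measure" where
  "run_measure A w = (THE M. prob_space M \<and> sets M = sets run_space \<and>
     (\<forall>n qs. measure M {r \<in> space M. \<forall>i\<le>n. r i = qs i} =
        pmf (init A) (qs 0) * (\<Prod>i<n. pmf (trans A (qs i) (w i)) (qs (Suc i)))))"

definition weight_seq :: "'s pwa \<Rightarrow> (nat \<Rightarrow> 's) \<Rightarrow> (nat \<Rightarrow> nat) \<Rightarrow> nat \<Rightarrow> real" where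
  "weight_seq A w r i = real_of_rat (weight A (r i) (w i) (r (Suc i)))"

definition LimSupV :: "(nat \<Rightarrow> real) \<Rightarrow> ereal" where
  "LimSupV v = limsup (\<lambda>n. ereal (v n))"

definition LimInfV :: "(nat \<Rightarrow> real) \<Rightarrow> ereal" where
  "LimInfV v = liminf (\<lambda>n. ereal (v n))"

definition val_event :: "'s pwa \<Rightarrow> ((nat \<Rightarrow> real) \<Rightarrow> ereal) \<Rightarrow> (nat \<Rightarrow> 's) \<Rightarrow> real \<Rightarrow> (nat \<Rightarrow> nat) set" where
  "val_event A Val w \<eta> = {r \<in> space (run_measure A w). ereal \<eta> \<le> Val (weight_seq A w r)}"

definition L_pos :: "'s pwa \<Rightarrow> ((nat \<Rightarrow> real) \<Rightarrow> ereal) \<Rightarrow> (nat \<Rightarrow> 's) \<Rightarrow> real" where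
  "L_pos A Val w = Sup {\<eta>. measure (run_measure A w) (val_event A Val w \<eta>) > 0}"

definition L_as :: "'s pwa \<Rightarrow> ((nat \<Rightarrow> real) \<Rightarrow> ereal) \<Rightarrow> (nat \<Rightarrow> 's) \<Rightarrow> real" where
  "L_as A Val w = Sup {\<eta>. measure (run_measure A w) (val_event A Val w \<eta>) = 1}"

end

theory Submission
  imports Defs
begin


type_synonym omega = "(nat \<times> nat \<times> ab) option \<Rightarrow> nat"

definition Mk :: "ab pwa \<Rightarrow> (nat \<times> nat \<times> ab) option \<Rightarrow> nat measure" where
  "Mk A k = (case k of None \<Rightarrow> measure_pmf (init A) | Some (i,q,\<sigma>) \<Rightarrow> measure_pmf (trans A q \<sigma>))"

definition Om :: "ab pwa \<Rightarrow> omega measure" where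
  "Om A = PiM UNIV (Mk A)"

primrec runR :: "ab pwa \<Rightarrow> (nat \<Rightarrow> ab) \<Rightarrow> omega \<Rightarrow> nat \<Rightarrow> nat" where
  "runR A w \<omega> 0 = \<omega> None"
| "runR A w \<omega> (Suc i) = \<omega> (Some (i, runR A w \<omega> i, w i))"

lemma sets_Mk[simp]: "sets (Mk A k) = UNIV" and space_Mk[simp]: "space (Mk A k) = UNIV"
  by (auto simp: Mk_def split: option.splits)

lemma prob_Mk: "prob_space (Mk A k)"
  by (auto simp: Mk_def split: option.splits intro: prob_space_measure_pmf)

lemma prob_Om: "prob_space (Om A)"
  unfolding Om_def by (rule prob_space_PiM) (rule prob_Mk)

lemma space_Om[simp]: "space (Om A) = UNIV"
  by (auto simp: Om_def space_PiM)

lemma comp_meas: "(\<lambda>\<omega>. \<omega> k) \<in> measurable (Om A) (count_space UNIV)"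
proof -
  have "(\<lambda>\<omega>. \<omega> k) \<in> measurable (Om A) (Mk A k)"
    unfolding Om_def by (rule measurable_component_singleton) simp
  then show ?thesis by (simp add: measurable_def)
qed

lemma runR_meas: "(\<lambda>\<omega>. runR A w \<omega> i) \<in> measurable (Om A) (count_space UNIV)"
proof (induction i)
  case 0 then show ?case by (simp add: comp_meas)
next
  case (Suc i)
  have "(\<lambda>\<omega>. (\<lambda>q \<omega>. \<omega> (Some (i, q, w i))) (runR A w \<omega> i) \<omega>) \<in> measurable (Om A) (count_space UNIV)"
    by (rule measurable_compose_countable[OF comp_meas Suc])
  then show ?case by simp
qed

lemma run_space_space[simp]: "space run_space = UNIV"
  by (simp add: run_space_def space_PiM)

lemma runR_meas_run: "runR A w \<in> measurable (Om A) run_space"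
  unfolding run_space_def
  by (rule measurable_PiM_single') (auto intro: runR_meas simp: space_PiM)

definition RM :: "ab pwa \<Rightarrow> (nat \<Rightarrow> ab) \<Rightarrow> (nat \<Rightarrow> nat) measure" where
  "RM A w = distr (Om A) run_space (runR A w)"

definition cylp :: "ab pwa \<Rightarrow> (nat \<Rightarrow> ab) \<Rightarrow> nat \<Rightarrow> (nat \<Rightarrow> nat) \<Rightarrow> real" where
  "cylp A w n qs = pmf (init A) (qs 0) * (\<Prod>i<n. pmf (trans A (qs i) (w i)) (qs (Suc i)))"

lemma all_le_Suc: "(\<forall>i\<le>Suc n. P i) \<longleftrightarrow> (\<forall>i\<le>n. P i) \<and> P (Suc n)"
  by (auto simp: le_Suc_eq)
lemma all_less_Suc: "(\<forall>i<Suc n. P i) \<longleftrightarrow> (\<forall>i<n. P i) \<and> P n"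
  by (auto simp: less_Suc_eq)

lemma cyl_eq: "{\<omega>. \<forall>i\<le>n. runR A w \<omega> i = qs i} =
   {\<omega>. \<omega> None = qs 0 \<and> (\<forall>i<n. \<omega> (Some (i, qs i, w i)) = qs (Suc i))}"
proof (induction n)
  case 0 then show ?case by simp
next
  case (Suc n)
  show ?case
  proof (rule Collect_cong)
    fix \<omega>
    have iff: "(\<forall>i\<le>n. runR A w \<omega> i = qs i) \<longleftrightarrow> (\<omega> None = qs 0 \<and> (\<forall>i<n. \<omega> (Some (i, qs i, w i)) = qs (Suc i)))"
      using arg_cong[where f="\<lambda>S. \<omega> \<in> S", OF Suc.IH] by (simp only: mem_Collect_eq)
    have e1: "(\<forall>i\<le>Suc n. runR A w \<omega> i = qs i) \<longleftrightarrow> (\<forall>i\<le>n. runR A w \<omega> i = qs i) \<and> runR A w \<omega> (Suc n) = qs (Suc n)"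
      by (rule all_le_Suc)
    have e2: "(\<forall>i<Suc n. \<omega> (Some (i, qs i, w i)) = qs (Suc i)) \<longleftrightarrow> (\<forall>i<n. \<omega> (Some (i, qs i, w i)) = qs (Suc i)) \<and> \<omega> (Some (n, qs n, w n)) = qs (Suc n)"
      by (rule all_less_Suc)
    show "(\<forall>i\<le>Suc n. runR A w \<omega> i = qs i) \<longleftrightarrow> (\<omega> None = qs 0 \<and> (\<forall>i<Suc n. \<omega> (Some (i, qs i, w i)) = qs (Suc i)))"
    proof
      assume L: "\<forall>i\<le>Suc n. runR A w \<omega> i = qs i"
      then have h1: "\<forall>i\<le>n. runR A w \<omega> i = qs i" and h2: "runR A w \<omega> (Suc n) = qs (Suc n)" using e1 by blast+
      from h1 have "runR A w \<omega> n = qs n" by simp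
      with h2 have "\<omega> (Some (n, qs n, w n)) = qs (Suc n)" by simp
      with h1 iff e2 show "\<omega> None = qs 0 \<and> (\<forall>i<Suc n. \<omega> (Some (i, qs i, w i)) = qs (Suc i))" by blast
    next
      assume R: "\<omega> None = qs 0 \<and> (\<forall>i<Suc n. \<omega> (Some (i, qs i, w i)) = qs (Suc i))"
      then have h1: "\<omega> None = qs 0 \<and> (\<forall>i<n. \<omega> (Some (i, qs i, w i)) = qs (Suc i))" and h2: "\<omega> (Some (n, qs n, w n)) = qs (Suc n)" using e2 by blast+
      with iff have h3: "\<forall>i\<le>n. runR A w \<omega> i = qs i" by blast
      then have "runR A w \<omega> n = qs n" by simp
      with h2 have "runR A w \<omega> (Suc n) = qs (Suc n)" by simp
      with h3 e1 show "\<forall>i\<le>Suc n. runR A w \<omega> i = qs i" by blast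
    qed
  qed
qed

lemma cyl_emeasure: "emeasure (Om A) {\<omega>. \<forall>i\<le>n. runR A w \<omega> i = qs i} = ennreal (cylp A w n qs)"
proof -
  define J :: "(nat \<times> nat \<times> ab) option set" where "J = insert None ((\<lambda>i. Some (i, qs i, w i)) ` {..<n})"
  define X :: "(nat \<times> nat \<times> ab) option \<Rightarrow> nat set" where "X j = {case j of None \<Rightarrow> qs 0 | Some (i,_,_) \<Rightarrow> qs (Suc i)}" for j
  have fin: "finite J" by (simp add: J_def)
  have "{\<omega>. \<forall>i\<le>n. runR A w \<omega> i = qs i} = prod_emb UNIV (Mk A) J (PiE J X)"
    unfolding cyl_eq by (auto simp: prod_emb_def J_def X_def PiE_iff)
  then have "emeasure (Om A) {\<omega>. \<forall>i\<le>n. runR A w \<omega> i = qs i} = (\<Prod>j\<in>J. emeasure (Mk A j) (X j))"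
    unfolding Om_def by (simp add: emeasure_PiM_emb prob_Mk fin)
  also have "\<dots> = emeasure (Mk A None) (X None) * (\<Prod>i<n. emeasure (Mk A (Some (i, qs i, w i))) (X (Some (i, qs i, w i))))"
    unfolding J_def by (subst prod.insert) (auto simp: prod.reindex inj_on_def)
  also have "\<dots> = ennreal (cylp A w n qs)"
    by (simp add: Mk_def X_def cylp_def emeasure_pmf_single prod_ennreal ennreal_mult prod_nonneg)
  finally show ?thesis .
qed

lemma prob_RM: "prob_space (RM A w)"
  unfolding RM_def by (rule prob_space.prob_space_distr[OF prob_Om runR_meas_run])

lemma sets_RM[simp]: "sets (RM A w) = sets run_space" and space_RM[simp]: "space (RM A w) = UNIV"
  by (auto simp: RM_def)

lemma cyl_run_sets: "{r. \<forall>i\<le>n. r i = qs i} \<in> sets run_space"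
proof -
  have "{r. \<forall>i\<le>n. r i = qs i} = (\<Inter>i\<in>{..n}. {r. r i = qs i})" by auto
  also have "\<dots> \<in> sets run_space"
  proof (intro sets.finite_INT)
    fix i
    have "(\<lambda>r. r i) \<in> measurable run_space (count_space UNIV)"
      unfolding run_space_def by (rule measurable_component_singleton) simp
    from measurable_sets[OF this, of "{qs i}"] show "{r. r i = qs i} \<in> sets run_space" by (simp add: vimage_def)
  qed auto
  finally show ?thesis .
qed

lemma RM_cyl: "measure (RM A w) {r \<in> space (RM A w). \<forall>i\<le>n. r i = qs i} = cylp A w n qs"
proof -
  have "measure (RM A w) {r \<in> space (RM A w). \<forall>i\<le>n. r i = qs i} = measure (Om A) (runR A w -` {r. \<forall>i\<le>n. r i = qs i})"
    unfolding RM_def using cyl_run_sets by (simp add: measure_distr runR_meas_run)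
  also have "\<dots> = cylp A w n qs"
    using cyl_emeasure[of A n w qs] by (simp add: measure_def vimage_def cylp_def prod_nonneg)
  finally show ?thesis .
qed



definition cylS :: "nat \<Rightarrow> nat list \<Rightarrow> (nat \<Rightarrow> nat) set" where
  "cylS N xs = {r. \<forall>i\<le>N. r i = xs ! i}"

lemma cylS_sets: "cylS N xs \<in> sets run_space"
  unfolding cylS_def by (rule cyl_run_sets)

lemma decomp:
  assumes det: "\<And>r r'. (\<forall>i\<le>N. r i = r' i) \<Longrightarrow> r \<in> E \<Longrightarrow> r' \<in> E"
  shows "E = (\<Union>xs\<in>{xs. length xs = Suc N \<and> (\<lambda>i. xs ! i) \<in> E}. cylS N xs)"
proof (intro set_eqI iffI)
  fix r assume r: "r \<in> E"
  define xs where "xs = map r [0..<Suc N]"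
  have nth: "\<forall>i\<le>N. xs ! i = r i" unfolding xs_def by (simp add: nth_map_upt del: upt_Suc)
  have "\<forall>i\<le>N. r i = xs ! i" using nth by simp
  from det[OF this r] have "(\<lambda>i. xs ! i) \<in> E" .
  moreover have "r \<in> cylS N xs" using nth by (simp add: cylS_def)
  moreover have "length xs = Suc N" by (simp add: xs_def)
  ultimately show "r \<in> (\<Union>xs\<in>{xs. length xs = Suc N \<and> (\<lambda>i. xs ! i) \<in> E}. cylS N xs)"
    by blast
next
  fix r assume "r \<in> (\<Union>xs\<in>{xs. length xs = Suc N \<and> (\<lambda>i. xs ! i) \<in> E}. cylS N xs)"
  then obtain xs where xs: "(\<lambda>i. xs ! i) \<in> E" "r \<in> cylS N xs" by blast
  have "\<forall>i\<le>N. xs ! i = r i" using xs(2) by (simp add: cylS_def)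
  from det[OF this xs(1)] show "r \<in> E" .
qed

lemma disj_cylS: "disjoint_family_on (cylS N) {xs. length xs = Suc N \<and> P xs}"
unfolding disjoint_family_on_def
proof (intro ballI impI)
  fix xs ys assume "xs \<in> {xs. length xs = Suc N \<and> P xs}" "ys \<in> {xs. length xs = Suc N \<and> P xs}" "xs \<noteq> ys"
  have "\<exists>i\<le>N. xs ! i \<noteq> ys ! i"
  proof (rule ccontr)
    assume "\<not> (\<exists>i\<le>N. xs ! i \<noteq> ys ! i)"
    then have "xs = ys" using \<open>xs \<in> _\<close> \<open>ys \<in> _\<close> by (intro nth_equalityI) auto
    then show False using \<open>xs \<noteq> ys\<close> by simp
  qed
  then obtain i where "i \<le> N" "xs ! i \<noteq> ys ! i" by blast
  then show "cylS N xs \<inter> cylS N ys = {}" by (auto simp: cylS_def)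
qed

lemma emeasure_decomp:
  assumes sM: "sets M = sets run_space"
    and det: "\<And>r r'. (\<forall>i\<le>N. r i = r' i) \<Longrightarrow> r \<in> E \<Longrightarrow> r' \<in> E"
  shows "emeasure M E = (\<integral>\<^sup>+xs. emeasure M (cylS N xs) \<partial>count_space {xs. length xs = Suc N \<and> (\<lambda>i. xs ! i) \<in> E})"
proof -
  have "emeasure M E = emeasure M (\<Union>xs\<in>{xs. length xs = Suc N \<and> (\<lambda>i. xs ! i) \<in> E}. cylS N xs)"
    by (rule arg_cong[OF decomp[OF det]])
  also have "\<dots> = (\<integral>\<^sup>+xs. emeasure M (cylS N xs) \<partial>count_space {xs. length xs = Suc N \<and> (\<lambda>i. xs ! i) \<in> E})"
    by (rule emeasure_UN_countable) (auto simp: sM cylS_sets intro: disj_cylS)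
  finally show ?thesis .
qed

lemma emeasure_det_eq:
  assumes s1: "sets M1 = sets run_space" and s2: "sets M2 = sets run_space"
    and eq: "\<And>xs. length xs = Suc N \<Longrightarrow> emeasure M1 (cylS N xs) = emeasure M2 (cylS N xs)"
    and det: "\<And>r r'. (\<forall>i\<le>N. r i = r' i) \<Longrightarrow> r \<in> E \<Longrightarrow> r' \<in> E"
  shows "emeasure M1 E = emeasure M2 E"
proof -
  have "emeasure M1 E = (\<integral>\<^sup>+xs. emeasure M1 (cylS N xs) \<partial>count_space {xs. length xs = Suc N \<and> (\<lambda>i. xs ! i) \<in> E})"
    by (rule emeasure_decomp[OF s1 det])
  also have "\<dots> = (\<integral>\<^sup>+xs. emeasure M2 (cylS N xs) \<partial>count_space {xs. length xs = Suc N \<and> (\<lambda>i. xs ! i) \<in> E})"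
    by (rule nn_integral_cong) (simp add: eq)
  also have "\<dots> = emeasure M2 E"
    by (rule emeasure_decomp[OF s2 det, symmetric])
  finally show ?thesis .
qed

lemma cyl_prop_RM: "prob_space (RM A w) \<and> sets (RM A w) = sets run_space \<and>
     (\<forall>n qs. measure (RM A w) {r \<in> space (RM A w). \<forall>i\<le>n. r i = qs i} =
        pmf (init A) (qs 0) * (\<Prod>i<n. pmf (trans A (qs i) (w i)) (qs (Suc i))))"
  using prob_RM RM_cyl by (simp add: cylp_def)

lemma run_measure_eq: "run_measure A w = RM A w"
  unfolding run_measure_def
proof (rule the1_equality)
  let ?P = "\<lambda>M. prob_space M \<and> sets M = sets run_space \<and>
     (\<forall>n qs. measure M {r \<in> space M. \<forall>i\<le>n. r i = qs i} =
        pmf (init A) (qs 0) * (\<Prod>i<n. pmf (trans A (qs i) (w i)) (qs (Suc i))))"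
  have uniq: "M = RM A w" if PM: "?P M" for M
  proof (rule measure_eqI_PiM_infinite)
    show "sets M = sets (PiM UNIV (\<lambda>_::nat. count_space (UNIV::nat set)))" using PM by (simp add: run_space_def)
    show "sets (RM A w) = sets (PiM UNIV (\<lambda>_::nat. count_space (UNIV::nat set)))" by (simp add: run_space_def)
    show "finite_measure M" using PM prob_space.finite_measure by blast
    fix Aa :: "nat \<Rightarrow> nat set" and J :: "nat set" assume J: "finite J" "J \<subseteq> UNIV"
    define N where "N = Max (insert 0 J)"
    have spM: "space M = UNIV" using PM sets_eq_imp_space_eq[of M run_space] by simp
    have cylM: "emeasure M (cylS N xs) = emeasure (RM A w) (cylS N xs)" for xs
    proof -
      have c1: "cylS N xs = {r \<in> space M. \<forall>i\<le>N. r i = xs ! i}" by (simp add: spM cylS_def)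
      have c2: "cylS N xs = {r \<in> space (RM A w). \<forall>i\<le>N. r i = xs ! i}" by (simp add: cylS_def)
      have "emeasure M (cylS N xs) = measure M (cylS N xs)"
        using PM by (simp add: prob_space.finite_measure finite_measure.emeasure_eq_measure)
      also have "\<dots> = measure (RM A w) (cylS N xs)"
      proof -
        have cm: "\<And>n qs. measure M {r \<in> space M. \<forall>i\<le>n. r i = qs i} =
          pmf (init A) (qs 0) * (\<Prod>i<n. pmf (trans A (qs i) (w i)) (qs (Suc i)))" using PM by blast
        have cr: "\<And>n qs. measure (RM A w) {r \<in> space (RM A w). \<forall>i\<le>n. r i = qs i} =
          pmf (init A) (qs 0) * (\<Prod>i<n. pmf (trans A (qs i) (w i)) (qs (Suc i)))" using cyl_prop_RM[of A w] by blast
        show ?thesis unfolding c1 cm unfolding c1[symmetric] c2 cr ..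
      qed
      also have "\<dots> = emeasure (RM A w) (cylS N xs)"
        using prob_RM by (simp add: prob_space.finite_measure finite_measure.emeasure_eq_measure)
      finally show ?thesis .
    qed
    show "emeasure M (prod_emb UNIV (\<lambda>_. count_space UNIV) J (Pi\<^sub>E J Aa)) =
          emeasure (RM A w) (prod_emb UNIV (\<lambda>_. count_space UNIV) J (Pi\<^sub>E J Aa))"
    proof (rule emeasure_det_eq[where N=N])
      show "sets M = sets run_space" using PM by simp
      show "sets (RM A w) = sets run_space" by simp
      show "emeasure M (cylS N xs) = emeasure (RM A w) (cylS N xs)" for xs by (rule cylM)
      fix r r' assume ag: "\<forall>i\<le>N. r i = r' i" and r: "r \<in> prod_emb UNIV (\<lambda>_. count_space UNIV) J (Pi\<^sub>E J Aa)"
      have "\<forall>j\<in>J. j \<le> N" unfolding N_def using J by simp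
      then show "r' \<in> prod_emb UNIV (\<lambda>_. count_space UNIV) J (Pi\<^sub>E J Aa)"
        using r ag by (auto simp: prod_emb_def PiE_iff)
    qed
  qed
  show "\<exists>!M. ?P M" using cyl_prop_RM[of A w] uniq by blast
  show "?P (RM A w)" by (rule cyl_prop_RM)
qed



lemma comp_run_meas: "(\<lambda>r. r j) \<in> measurable run_space (count_space UNIV)"
  unfolding run_space_def by (rule measurable_component_singleton) simp

lemma pair_meas: "(\<lambda>r. g (r i) (r j) :: real) \<in> borel_measurable run_space"
proof -
  have h: "(\<lambda>r. g q (r j)) \<in> borel_measurable run_space" for q
  proof (rule measurable_compose_countable[where f="\<lambda>q' r. g q q'" and g="\<lambda>r. r j"])
    show "(\<lambda>r. r j) \<in> measurable run_space (count_space UNIV)" by (rule comp_run_meas)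
  qed (rule measurable_const, simp)
  show ?thesis
  proof (rule measurable_compose_countable[where f="\<lambda>q r. g q (r j)" and g="\<lambda>r. r i"])
    show "(\<lambda>r. r i) \<in> measurable run_space (count_space UNIV)" by (rule comp_run_meas)
  qed (rule h)
qed

lemma ws_meas[measurable]: "(\<lambda>r. weight_seq B w r i) \<in> borel_measurable run_space"
  unfolding weight_seq_def by (rule pair_meas)

lemma LimSup_meas: "(\<lambda>r. LimSupV (weight_seq B w r)) \<in> borel_measurable run_space"
  unfolding LimSupV_def by measurable

lemma LimInf_meas: "(\<lambda>r. LimInfV (weight_seq B w r)) \<in> borel_measurable run_space"
  unfolding LimInfV_def by measurable

lemma event_trans:
  assumes V: "(\<lambda>r. Val (weight_seq B w r)) \<in> borel_measurable run_space"
  shows "measure (run_measure B w) (val_event B Val w \<eta>) =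
         measure (Om B) {\<omega> \<in> space (Om B). ereal \<eta> \<le> Val (weight_seq B w (runR B w \<omega>))}"
    and "{\<omega> \<in> space (Om B). ereal \<eta> \<le> Val (weight_seq B w (runR B w \<omega>))} \<in> sets (Om B)"
proof -
  have E: "{r \<in> space run_space. ereal \<eta> \<le> Val (weight_seq B w r)} \<in> sets run_space"
  proof -
    have "(\<lambda>r. Val (weight_seq B w r)) -` {ereal \<eta>..} \<inter> space run_space \<in> sets run_space"
      by (rule measurable_sets[OF V]) simp
    moreover have "{r \<in> space run_space. ereal \<eta> \<le> Val (weight_seq B w r)} = (\<lambda>r. Val (weight_seq B w r)) -` {ereal \<eta>..} \<inter> space run_space"
      by auto
    ultimately show ?thesis by simp
  qed
  have "measure (run_measure B w) (val_event B Val w \<eta>) =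
     measure (Om B) (runR B w -` {r \<in> space run_space. ereal \<eta> \<le> Val (weight_seq B w r)} \<inter> space (Om B))"
  proof -
    have sp: "space (RM B w) = space run_space" by simp
    show ?thesis unfolding run_measure_eq val_event_def sp unfolding RM_def
      by (rule measure_distr[OF runR_meas_run E])
  qed
  then show "measure (run_measure B w) (val_event B Val w \<eta>) =
         measure (Om B) {\<omega> \<in> space (Om B). ereal \<eta> \<le> Val (weight_seq B w (runR B w \<omega>))}"
    by (simp add: vimage_def)
  have "runR B w -` {r \<in> space run_space. ereal \<eta> \<le> Val (weight_seq B w r)} \<inter> space (Om B) \<in> sets (Om B)"
    by (rule measurable_sets[OF runR_meas_run E])
  then show "{\<omega> \<in> space (Om B). ereal \<eta> \<le> Val (weight_seq B w (runR B w \<omega>))} \<in> sets (Om B)"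
    by (simp add: vimage_def)
qed

lemma L_as_AE:
  assumes V: "(\<lambda>r. Val (weight_seq B w r)) \<in> borel_measurable run_space"
  shows "L_as B Val w = Sup {\<eta>. AE \<omega> in Om B. ereal \<eta> \<le> Val (weight_seq B w (runR B w \<omega>))}"
proof -
  have "{\<eta>. measure (run_measure B w) (val_event B Val w \<eta>) = 1} = {\<eta>. AE \<omega> in Om B. ereal \<eta> \<le> Val (weight_seq B w (runR B w \<omega>))}"
  proof (rule Collect_cong)
    fix \<eta>
    show "measure (run_measure B w) (val_event B Val w \<eta>) = 1 \<longleftrightarrow> (AE \<omega> in Om B. ereal \<eta> \<le> Val (weight_seq B w (runR B w \<omega>)))"
      unfolding event_trans(1)[OF V] by (rule prob_space.prob_Collect_eq_1[OF prob_Om event_trans(2)[OF V]])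
  qed
  then show ?thesis unfolding L_as_def by (rule arg_cong)
qed

lemma L_pos_AE:
  assumes V: "(\<lambda>r. Val (weight_seq B w r)) \<in> borel_measurable run_space"
  shows "L_pos B Val w = Sup {\<eta>. \<not> (AE \<omega> in Om B. \<not> ereal \<eta> \<le> Val (weight_seq B w (runR B w \<omega>)))}"
proof -
  have "{\<eta>. measure (run_measure B w) (val_event B Val w \<eta>) > 0} = {\<eta>. \<not> (AE \<omega> in Om B. \<not> ereal \<eta> \<le> Val (weight_seq B w (runR B w \<omega>)))}"
  proof (rule Collect_cong)
    fix \<eta>
    have z: "measure (Om B) {\<omega> \<in> space (Om B). ereal \<eta> \<le> Val (weight_seq B w (runR B w \<omega>))} = 0 \<longleftrightarrow> (AE \<omega> in Om B. \<not> ereal \<eta> \<le> Val (weight_seq B w (runR B w \<omega>)))"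
      by (rule prob_space.prob_Collect_eq_0[OF prob_Om event_trans(2)[OF V]])
    have nn: "measure (Om B) {\<omega> \<in> space (Om B). ereal \<eta> \<le> Val (weight_seq B w (runR B w \<omega>))} \<ge> 0"
      by (rule measure_nonneg)
    show "measure (run_measure B w) (val_event B Val w \<eta>) > 0 \<longleftrightarrow> \<not> (AE \<omega> in Om B. \<not> ereal \<eta> \<le> Val (weight_seq B w (runR B w \<omega>)))"
      unfolding event_trans(1)[OF V] z[symmetric] using nn by linarith
  qed
  then show ?thesis unfolding L_pos_def by (rule arg_cong)
qed



lemma AE_comp: "AE \<omega> in Om B. \<omega> k \<in> set_pmf (case k of None \<Rightarrow> init B | Some (i,q,\<sigma>) \<Rightarrow> trans B q \<sigma>)"
proof -
  have "AE x in Mk B k. x \<in> set_pmf (case k of None \<Rightarrow> init B | Some (i,q,\<sigma>) \<Rightarrow> trans B q \<sigma>)"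
    unfolding Mk_def by (simp add: AE_measure_pmf_iff split: option.split prod.split)
  then show ?thesis unfolding Om_def by (rule AE_PiM_component[OF prob_Mk UNIV_I])
qed

lemma AE_all_comp: "AE \<omega> in Om B. \<forall>k. \<omega> k \<in> set_pmf (case k of None \<Rightarrow> init B | Some (i,q,\<sigma>) \<Rightarrow> trans B q \<sigma>)"
  unfolding AE_all_countable using AE_comp by blast

lemma runR_states:
  assumes wf: "wf_pwa B"
    and h: "\<forall>k. \<omega> k \<in> set_pmf (case k of None \<Rightarrow> init B | Some (i,q,\<sigma>) \<Rightarrow> trans B q \<sigma>)"
  shows "runR B w \<omega> i \<in> states B"
proof (induction i)
  case 0
  have "\<omega> None \<in> set_pmf (init B)" using h[rule_format, of None] by simp
  then show ?case using wf by (auto simp: wf_pwa_def)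
next
  case (Suc i)
  have "\<omega> (Some (i, runR B w \<omega> i, w i)) \<in> set_pmf (trans B (runR B w \<omega> i) (w i))"
    using h[rule_format, of "Some (i, runR B w \<omega> i, w i)"] by simp
  then show ?case using wf Suc unfolding wf_pwa_def by auto
qed

lemma AE_states: "wf_pwa B \<Longrightarrow> AE \<omega> in Om B. \<forall>i. runR B w \<omega> i \<in> states B"
  using AE_all_comp by (rule AE_mp) (auto intro: runR_states)

definition wbound :: "ab pwa \<Rightarrow> real" where
  "wbound B = Max (insert 0 ((\<lambda>(q,\<sigma>,q'). \<bar>real_of_rat (weight B q \<sigma> q')\<bar>) ` (states B \<times> UNIV \<times> states B)))"

lemma wbound: assumes "wf_pwa B" "q \<in> states B" "q' \<in> states B"
  shows "\<bar>real_of_rat (weight B q \<sigma> q')\<bar> \<le> wbound B"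
proof -
  have fin: "finite (states B \<times> (UNIV::ab set) \<times> states B)" using assms(1) by (simp add: wf_pwa_def)
  have mem: "\<bar>real_of_rat (weight B q \<sigma> q')\<bar> \<in> insert 0 ((\<lambda>(q,\<sigma>,q'). \<bar>real_of_rat (weight B q \<sigma> q')\<bar>) ` (states B \<times> UNIV \<times> states B))"
    by (rule insertI2, rule image_eqI[where x="(q,\<sigma>,q')"]) (use assms in auto)
  show ?thesis unfolding wbound_def
    by (rule Max_ge[OF _ mem]) (use fin in simp)
qed

lemma ws_bound: "wf_pwa B \<Longrightarrow> \<forall>i. r i \<in> states B \<Longrightarrow> \<bar>weight_seq B w r i\<bar> \<le> wbound B"
  unfolding weight_seq_def by (intro wbound) auto

lemma AE_wbound: "wf_pwa B \<Longrightarrow> AE \<omega> in Om B. \<forall>i. \<bar>weight_seq B w (runR B w \<omega>) i\<bar> \<le> wbound B"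
  using AE_states[of B w] by (rule AE_mp) (auto intro!: ws_bound)

lemma limsup_bounds: assumes "\<forall>i. \<bar>f i\<bar> \<le> M"
  shows "ereal (-M) \<le> limsup (\<lambda>n. ereal (f n))" "limsup (\<lambda>n. ereal (f n)) \<le> ereal M"
    and "ereal (-M) \<le> liminf (\<lambda>n. ereal (f n))" "liminf (\<lambda>n. ereal (f n)) \<le> ereal M"
proof -
  have lo: "\<forall>\<^sub>F n in sequentially. ereal (-M) \<le> ereal (f n)"
  proof (intro always_eventually allI)
    fix n from assms have "\<bar>f n\<bar> \<le> M" by blast
    then have "-M \<le> f n" by (auto simp: abs_le_iff)
    then show "ereal (-M) \<le> ereal (f n)" by simp
  qed
  have hi: "\<forall>\<^sub>F n in sequentially. ereal (f n) \<le> ereal M"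
  proof (intro always_eventually allI)
    fix n from assms have "\<bar>f n\<bar> \<le> M" by blast
    then have "f n \<le> M" by (auto simp: abs_le_iff)
    then show "ereal (f n) \<le> ereal M" by simp
  qed
  show "ereal (-M) \<le> limsup (\<lambda>n. ereal (f n))" by (rule le_Limsup[OF _ lo]) simp
  show "limsup (\<lambda>n. ereal (f n)) \<le> ereal M" by (rule Limsup_bounded[OF hi])
  show "ereal (-M) \<le> liminf (\<lambda>n. ereal (f n))" by (rule Liminf_bounded[OF lo])
  show "liminf (\<lambda>n. ereal (f n)) \<le> ereal M" by (rule Liminf_le[OF _ hi]) simp
qed

lemma sup_as:
  assumes P: "prob_space P" and bnd: "AE x in P. ereal (-M) \<le> X x \<and> X x \<le> ereal M"
  shows "c < Sup {\<eta>. AE x in P. ereal \<eta> \<le> X x} \<Longrightarrow> AE x in P. ereal c \<le> X x"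
    and "(AE x in P. ereal c \<le> X x) \<Longrightarrow> c \<le> Sup {\<eta>. AE x in P. ereal \<eta> \<le> X x}"
proof -
  interpret prob_space P by (rule P)
  let ?S = "{\<eta>. AE x in P. ereal \<eta> \<le> X x}"
  have ne: "?S \<noteq> {}"
  proof -
    have "-M \<in> ?S" using bnd by (auto elim: AE_mp)
    then show ?thesis by blast
  qed
  have bdd: "bdd_above ?S"
  proof (rule bdd_aboveI)
    fix \<eta> assume "\<eta> \<in> ?S"
    then have "AE x in P. ereal \<eta> \<le> X x" by simp
    from this bnd have "AE x in P. ereal \<eta> \<le> ereal M" by eventually_elim (blast intro: order_trans)
    then show "\<eta> \<le> M" by (cases "\<eta> \<le> M") (auto simp: AE_False)
  qed
  show "c < Sup ?S \<Longrightarrow> AE x in P. ereal c \<le> X x"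
  proof -
    assume "c < Sup ?S"
    then obtain \<eta> where S: "\<eta> \<in> ?S" and c: "c < \<eta>" using less_cSup_iff[OF ne bdd] by blast
    from S have "AE x in P. ereal \<eta> \<le> X x" by simp
    then show ?thesis
    proof eventually_elim
      fix x assume "ereal \<eta> \<le> X x"
      moreover have "ereal c \<le> ereal \<eta>" using c by simp
      ultimately show "ereal c \<le> X x" by (rule order_trans[rotated])
    qed
  qed
  show "(AE x in P. ereal c \<le> X x) \<Longrightarrow> c \<le> Sup ?S"
    by (rule cSup_upper[OF _ bdd]) simp
qed

lemma sup_pos:
  assumes P: "prob_space P" and bnd: "AE x in P. ereal (-M) \<le> X x \<and> X x \<le> ereal M"
  shows "c < Sup {\<eta>. \<not> (AE x in P. \<not> ereal \<eta> \<le> X x)} \<Longrightarrow> \<not> (AE x in P. \<not> ereal c \<le> X x)"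
    and "\<not> (AE x in P. \<not> ereal c \<le> X x) \<Longrightarrow> c \<le> Sup {\<eta>. \<not> (AE x in P. \<not> ereal \<eta> \<le> X x)}"
proof -
  interpret prob_space P by (rule P)
  let ?S = "{\<eta>. \<not> (AE x in P. \<not> ereal \<eta> \<le> X x)}"
  have ne: "?S \<noteq> {}"
  proof -
    have "\<not> (AE x in P. \<not> ereal (-M) \<le> X x)"
    proof
      assume "AE x in P. \<not> ereal (-M) \<le> X x"
      with bnd have "AE x in P. False" by eventually_elim auto
      then show False by (simp add: AE_False)
    qed
    then have "-M \<in> ?S" by simp
    then show ?thesis by blast
  qed
  have bdd: "bdd_above ?S"
  proof (rule bdd_aboveI)
    fix \<eta> assume S: "\<eta> \<in> ?S"
    show "\<eta> \<le> M"
    proof (rule ccontr)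
      assume nle: "\<not> \<eta> \<le> M"
      from bnd have "AE x in P. \<not> ereal \<eta> \<le> X x"
      proof eventually_elim
        fix x assume "ereal (-M) \<le> X x \<and> X x \<le> ereal M"
        then show "\<not> ereal \<eta> \<le> X x" using nle by (metis ereal_less_eq(3) order_trans)
      qed
      with S show False by simp
    qed
  qed
  show "c < Sup ?S \<Longrightarrow> \<not> (AE x in P. \<not> ereal c \<le> X x)"
  proof -
    assume "c < Sup ?S"
    then obtain \<eta> where S: "\<eta> \<in> ?S" and c: "c < \<eta>" using less_cSup_iff[OF ne bdd] by blast
    show ?thesis
    proof
      assume "AE x in P. \<not> ereal c \<le> X x"
      then have "AE x in P. \<not> ereal \<eta> \<le> X x" by eventually_elim (use c in \<open>metis ereal_less_eq(3) less_imp_le order_trans\<close>)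
      with S show False by simp
    qed
  qed
  show "\<not> (AE x in P. \<not> ereal c \<le> X x) \<Longrightarrow> c \<le> Sup ?S"
    by (rule cSup_upper[OF _ bdd]) simp
qed



lemma pred2_meas: "(\<lambda>\<omega>. Q (runR B v \<omega> i) (runR B v \<omega> j) :: bool) \<in> measurable (Om B) (count_space UNIV)"
proof -
  have h: "(\<lambda>\<omega>. Q q (runR B v \<omega> j)) \<in> measurable (Om B) (count_space UNIV)" for q
  proof (rule measurable_compose_countable[where f="\<lambda>q' \<omega>. Q q q'" and g="\<lambda>\<omega>. runR B v \<omega> j"])
    show "(\<lambda>\<omega>. runR B v \<omega> j) \<in> measurable (Om B) (count_space UNIV)" by (rule runR_meas)
  qed (rule measurable_const, simp)
  show ?thesis
  proof (rule measurable_compose_countable[where f="\<lambda>q \<omega>. Q q (runR B v \<omega> j)" and g="\<lambda>\<omega>. runR B v \<omega> i"])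
    show "(\<lambda>\<omega>. runR B v \<omega> i) \<in> measurable (Om B) (count_space UNIV)" by (rule runR_meas)
  qed (rule h)
qed

definition Ev :: "ab pwa \<Rightarrow> (nat \<Rightarrow> ab \<Rightarrow> nat \<Rightarrow> bool) \<Rightarrow> (nat \<Rightarrow> ab) \<Rightarrow> nat \<Rightarrow> omega set" where
  "Ev B G v i = {\<omega>. G (runR B v \<omega> i) (v i) (runR B v \<omega> (Suc i))}"

definition Win :: "ab pwa \<Rightarrow> (nat \<Rightarrow> ab \<Rightarrow> nat \<Rightarrow> bool) \<Rightarrow> (nat \<Rightarrow> ab) \<Rightarrow> nat \<Rightarrow> nat \<Rightarrow> omega set" where
  "Win B G v s K = (\<Union>i\<in>{s..<s+K}. Ev B G v i)"

definition Fr :: "ab pwa \<Rightarrow> (nat \<Rightarrow> ab \<Rightarrow> nat \<Rightarrow> bool) \<Rightarrow> (nat \<Rightarrow> ab) \<Rightarrow> omega set" where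
  "Fr B G v = {\<omega>. \<forall>N. \<exists>i\<ge>N. \<omega> \<in> Ev B G v i}"

lemma Ev_sets: "Ev B G v i \<in> sets (Om B)"
proof -
  have "(\<lambda>\<omega>. G (runR B v \<omega> i) (v i) (runR B v \<omega> (Suc i))) -` {True} \<inter> space (Om B) \<in> sets (Om B)"
    by (rule measurable_sets[OF pred2_meas]) simp
  then show ?thesis by (simp add: Ev_def vimage_def)
qed

lemma Win_sets: "Win B G v s K \<in> sets (Om B)"
  unfolding Win_def by (intro sets.finite_UN) (auto intro: Ev_sets)

lemma Fr_sets: "Fr B G v \<in> sets (Om B)"
proof -
  have "Fr B G v = (\<Inter>N. \<Union>i\<in>{N..}. Ev B G v i)" by (auto simp: Fr_def)
  also have "\<dots> \<in> sets (Om B)" by (intro sets.countable_INT' sets.countable_UN') (auto intro: Ev_sets)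
  finally show ?thesis .
qed

lemma Win_mono: "K \<le> K' \<Longrightarrow> Win B G v s K \<subseteq> Win B G v s K'"
  unfolding Win_def by (intro UN_mono) auto

lemma stepA:
  assumes AE: "AE \<omega> in Om B. \<omega> \<in> Fr B G v" and e: "e > 0"
  shows "\<exists>K. measure (Om B) (Win B G v s K) > 1 - e"
proof -
  interpret prob_space "Om B" by (rule prob_Om)
  have inc: "incseq (\<lambda>K. Win B G v s K)" by (rule monoI) (rule Win_mono)
  have rng: "range (\<lambda>K. Win B G v s K) \<subseteq> sets (Om B)" using Win_sets by blast
  have lim: "(\<lambda>K. prob (Win B G v s K)) \<longlonglongrightarrow> prob (\<Union>K. Win B G v s K)"
    by (rule finite_Lim_measure_incseq[OF rng inc])
  have sub: "Fr B G v \<subseteq> (\<Union>K. Win B G v s K)"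
  proof
    fix \<omega> assume "\<omega> \<in> Fr B G v"
    then obtain i where "i \<ge> s" "\<omega> \<in> Ev B G v i" by (auto simp: Fr_def)
    then have "\<omega> \<in> Win B G v s (Suc (i - s))" unfolding Win_def by auto
    then show "\<omega> \<in> (\<Union>K. Win B G v s K)" by blast
  qed
  have "prob (Fr B G v) = 1" using AE prob_eq_1[OF Fr_sets] by simp
  moreover have "prob (Fr B G v) \<le> prob (\<Union>K. Win B G v s K)"
    by (rule finite_measure_mono[OF sub]) (use rng in auto)
  ultimately have one: "prob (\<Union>K. Win B G v s K) = 1" using prob_le_1 by (metis antisym)
  have "1 - e < 1" using e by simp
  from order_tendstoD(1)[OF lim[unfolded one] this] obtain K where "prob (Win B G v s K) > 1 - e"
    by (auto simp: eventually_sequentially)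
  then show ?thesis by blast
qed

lemma runR_agree: "(\<forall>t<T. v t = v' t) \<Longrightarrow> t \<le> T \<Longrightarrow> runR B v \<omega> t = runR B v' \<omega> t"
  by (induction t) auto

lemma Win_agree: assumes "\<forall>t<s+K. v t = v' t" shows "Win B G v s K = Win B G v' s K"
proof -
  have "Ev B G v i = Ev B G v' i" if "i \<in> {s..<s+K}" for i
  proof -
    have "runR B v \<omega> i = runR B v' \<omega> i" for \<omega>
      by (rule runR_agree[where T="s+K"]) (use that assms in auto)
    moreover have "runR B v \<omega> (Suc i) = runR B v' \<omega> (Suc i)" for \<omega>
      by (rule runR_agree[where T="s+K"]) (use that assms in auto)
    moreover have "v i = v' i" using that assms by auto
    ultimately show ?thesis unfolding Ev_def by simp
  qed
  then show ?thesis unfolding Win_def by auto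
qed



lemma core:
  assumes hyp: "\<And>v. (\<exists>n. \<forall>i\<ge>n. v i = b) \<Longrightarrow> AE \<omega> in Om B. \<omega> \<in> Fr B G v"
  shows "\<exists>w. (\<forall>N. \<exists>i\<ge>N. w i = a) \<and> (AE \<omega> in Om B. \<omega> \<in> Fr B G w)"
proof -
  interpret prob_space "Om B" by (rule prob_Om)
  define Kf where "Kf j n u = (SOME K. prob (Win B G u n K) > 1 - 1 / real (Suc j))" for j n u
  define st where "st = rec_nat (0::nat, \<lambda>_::nat. b)
      (\<lambda>j p. (fst p + Kf j (fst p) (snd p) + 1, (snd p)(fst p + Kf j (fst p) (snd p) := a)))"
  define n where "n j = fst (st j)" for j
  define u where "u j = snd (st j)" for j
  define K where "K j = Kf j (n j) (u j)" for j
  have n0: "n 0 = 0" and u0: "u 0 = (\<lambda>_. b)" by (simp_all add: n_def u_def st_def)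
  have nS: "n (Suc j) = n j + K j + 1" for j by (simp add: n_def u_def K_def st_def)
  have uS: "u (Suc j) = (u j)(n j + K j := a)" for j by (simp add: n_def u_def K_def st_def)
  have evb: "\<forall>i\<ge>n j. u j i = b" for j
  proof (induction j)
    case 0 then show ?case by (simp add: u0)
  next
    case (Suc j) then show ?case by (simp add: uS nS)
  qed
  have nj: "j \<le> n j" for j
  proof (induction j)
    case 0 then show ?case by simp
  next
    case (Suc j) then show ?case by (simp add: nS)
  qed
  have Kspec: "prob (Win B G (u j) (n j) (K j)) > 1 - 1 / real (Suc j)" for j
  proof -
    have "\<exists>K. prob (Win B G (u j) (n j) K) > 1 - 1 / real (Suc j)"
      by (rule stepA[OF hyp]) (use evb in auto)
    then show ?thesis unfolding K_def Kf_def by (rule someI_ex)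
  qed
  have ninc: "incseq n" by (rule incseq_SucI) (simp add: nS)
  have agree: "\<forall>i. i < n j + K j \<longrightarrow> u (j + d) i = u j i" for j d
  proof (induction d)
    case 0 then show ?case by simp
  next
    case (Suc d)
    show ?case
    proof (intro allI impI)
      fix i assume i: "i < n j + K j"
      have ne: "i \<noteq> n (j + d) + K (j + d)"
      proof (cases d)
        case 0 then show ?thesis using i by simp
      next
        case (Suc d')
        have "n (Suc j) \<le> n (j + d)" using ninc Suc by (simp add: incseq_def)
        then show ?thesis using i nS[of j] by simp
      qed
      have "u (j + Suc d) i = u (j + d) i" using ne by (simp add: uS)
      then show "u (j + Suc d) i = u j i" using Suc i by simp
    qed
  qed
  have agree': "u m i = u j i" if "j \<le> m" "i < n j + K j" for j m i
    using agree[of j "m - j"] that by simp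
  define w where "w i = u (Suc i) i" for i
  have wagree: "w i = u j i" if "i < n j + K j" for i j
  proof -
    let ?m = "max j (Suc i)"
    have "u ?m i = u j i" by (rule agree') (use that in auto)
    moreover have "u ?m i = u (Suc i) i"
    proof (rule agree')
      show "Suc i \<le> ?m" by simp
      show "i < n (Suc i) + K (Suc i)" using nj[of "Suc i"] by simp
    qed
    ultimately show ?thesis unfolding w_def by simp
  qed
  have inf_a: "\<forall>N. \<exists>i\<ge>N. w i = a"
  proof
    fix N
    have "w (n N + K N) = u (Suc N) (n N + K N)" by (rule wagree) (simp add: nS)
    also have "\<dots> = a" by (simp add: uS)
    finally have "w (n N + K N) = a" .
    moreover have "n N + K N \<ge> N" using nj[of N] by simp
    ultimately show "\<exists>i\<ge>N. w i = a" by blast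
  qed
  have winw: "prob (Win B G w (n j) (K j)) > 1 - 1 / real (Suc j)" for j
  proof -
    have "Win B G w (n j) (K j) = Win B G (u j) (n j) (K j)"
      by (rule Win_agree) (auto intro: wagree)
    then show ?thesis using Kspec[of j] by simp
  qed
  define U where "U J = (\<Union>j\<in>{J..}. Win B G w (n j) (K j))" for J
  have Usets: "range U \<subseteq> sets (Om B)" unfolding U_def
    by (auto intro!: sets.countable_UN' Win_sets)
  have Udec: "decseq U" unfolding U_def by (rule decseq_SucI) (intro UN_mono, auto)
  have lim: "(\<lambda>J. prob (U J)) \<longlonglongrightarrow> prob (\<Inter>J. U J)"
    by (rule finite_Lim_measure_decseq[OF Usets Udec])
  have lb: "1 - 1 / real (Suc J) \<le> prob (U J)" for J
  proof -
    have "prob (Win B G w (n J) (K J)) \<le> prob (U J)"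
      by (rule finite_measure_mono) (use Usets in \<open>auto simp: U_def\<close>)
    then show ?thesis using winw[of J] by simp
  qed
  have lim1: "(\<lambda>J. 1 - 1 / real (Suc J)) \<longlonglongrightarrow> 1"
  proof -
    have "(\<lambda>J. 1 - inverse (real (Suc J))) \<longlonglongrightarrow> 1 - 0"
      by (intro tendsto_diff tendsto_const LIMSEQ_inverse_real_of_nat)
    then show ?thesis by (simp add: inverse_eq_divide)
  qed
  have "1 \<le> prob (\<Inter>J. U J)"
    by (rule LIMSEQ_le[OF lim1 lim]) (use lb in blast)
  then have "prob (\<Inter>J. U J) = 1" using prob_le_1 by (metis antisym)
  then have AEU: "AE \<omega> in Om B. \<omega> \<in> (\<Inter>J. U J)" by (rule AE_prob_1)
  have sub: "(\<Inter>J. U J) \<subseteq> Fr B G w"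
  proof
    fix \<omega> assume "\<omega> \<in> (\<Inter>J. U J)"
    then have h: "\<forall>J. \<exists>j\<ge>J. \<exists>i\<in>{n j..<n j + K j}. \<omega> \<in> Ev B G w i"
      unfolding U_def Win_def by blast
    show "\<omega> \<in> Fr B G w" unfolding Fr_def
    proof (intro CollectI allI)
      fix N
      from h obtain j i where "j \<ge> N" "i \<in> {n j..<n j + K j}" "\<omega> \<in> Ev B G w i" by blast
      moreover have "n j \<ge> j" by (rule nj)
      ultimately show "\<exists>i\<ge>N. \<omega> \<in> Ev B G w i" by (intro exI[of _ i]) auto
    qed
  qed
  have "AE \<omega> in Om B. \<omega> \<in> Fr B G w"
    using AEU by (rule AE_mp) (rule AE_I2, use sub in blast)
  with inf_a show ?thesis by blast
qed



lemma L1: "ereal c < limsup (\<lambda>n. ereal (f n)) \<Longrightarrow> \<forall>N. \<exists>i\<ge>N. c < f i"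
proof (rule ccontr)
  assume lt: "ereal c < limsup (\<lambda>n. ereal (f n))" and "\<not> (\<forall>N. \<exists>i\<ge>N. c < f i)"
  then obtain N where "\<forall>i\<ge>N. f i \<le> c" by (auto simp: not_less)
  then have "\<forall>\<^sub>F n in sequentially. ereal (f n) \<le> ereal c" by (auto simp: eventually_sequentially)
  then have "limsup (\<lambda>n. ereal (f n)) \<le> ereal c" by (rule Limsup_bounded)
  with lt show False by simp
qed

lemma L2: "\<forall>N. \<exists>i\<ge>N. c \<le> f i \<Longrightarrow> ereal c \<le> limsup (\<lambda>n. ereal (f n))"
proof (rule ccontr)
  assume h: "\<forall>N. \<exists>i\<ge>N. c \<le> f i" and "\<not> ereal c \<le> limsup (\<lambda>n. ereal (f n))"
  then have "limsup (\<lambda>n. ereal (f n)) < ereal c" by simp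
  then have "\<forall>\<^sub>F n in sequentially. ereal (f n) < ereal c" by (rule Limsup_lessD)
  then obtain N where "\<forall>i\<ge>N. f i < c" by (auto simp: eventually_sequentially)
  with h show False by (meson not_less)
qed

lemma L3: "ereal c < liminf (\<lambda>n. ereal (f n)) \<Longrightarrow> \<exists>N. \<forall>i\<ge>N. c < f i"
proof -
  assume "ereal c < liminf (\<lambda>n. ereal (f n))"
  then have "\<forall>\<^sub>F n in sequentially. ereal (f n) > ereal c" by (rule less_LiminfD)
  then show ?thesis by (auto simp: eventually_sequentially)
qed

lemma L4: "\<exists>N. \<forall>i\<ge>N. c \<le> f i \<Longrightarrow> ereal c \<le> liminf (\<lambda>n. ereal (f n))"
proof -
  assume "\<exists>N. \<forall>i\<ge>N. c \<le> f i"
  then have "\<forall>\<^sub>F n in sequentially. ereal c \<le> ereal (f n)" by (auto simp: eventually_sequentially)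
  then show ?thesis by (rule Liminf_bounded)
qed

lemma L_as_const:
  fixes A :: "ab pwa"
  assumes V: "(\<lambda>r. Val (weight_seq A w r)) \<in> borel_measurable run_space"
    and c: "\<And>r. Val (weight_seq A w r) = ereal c"
  shows "L_as A Val w = c"
proof -
  interpret prob_space "Om A" by (rule prob_Om)
  have "L_as A Val w = Sup {\<eta>. AE \<omega> in Om A. ereal \<eta> \<le> Val (weight_seq A w (runR A w \<omega>))}"
    by (rule L_as_AE[OF V])
  also have "{\<eta>. AE \<omega> in Om A. ereal \<eta> \<le> Val (weight_seq A w (runR A w \<omega>))} = {..c}"
    by (auto simp: c)
  finally show ?thesis by simp
qed

lemma L_pos_const:
  fixes A :: "ab pwa"
  assumes V: "(\<lambda>r. Val (weight_seq A w r)) \<in> borel_measurable run_space"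
    and c: "\<And>r. Val (weight_seq A w r) = ereal c"
  shows "L_pos A Val w = c"
proof -
  interpret prob_space "Om A" by (rule prob_Om)
  have "L_pos A Val w = Sup {\<eta>. \<not> (AE \<omega> in Om A. \<not> ereal \<eta> \<le> Val (weight_seq A w (runR A w \<omega>)))}"
    by (rule L_pos_AE[OF V])
  also have "{\<eta>. \<not> (AE \<omega> in Om A. \<not> ereal \<eta> \<le> Val (weight_seq A w (runR A w \<omega>)))} = {..c}"
    by (auto simp: c)
  finally show ?thesis by simp
qed

lemma not_inf_a: "\<not> (\<forall>N. \<exists>i\<ge>N. w i = a) \<longleftrightarrow> (\<exists>N. \<forall>i\<ge>N. w i = b)"
proof -
  have "\<And>i. w i \<noteq> a \<longleftrightarrow> w i = b" by (case_tac "w i") auto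
  then show ?thesis by auto
qed

definition A1 :: "ab pwa" where
  "A1 = \<lparr>states = {0}, init = return_pmf 0, trans = (\<lambda>_ _. return_pmf 0),
         weight = (\<lambda>_ \<sigma> _. if \<sigma> = a then 1 else 0)\<rparr>"

definition A2 :: "ab pwa" where
  "A2 = \<lparr>states = {0}, init = return_pmf 0, trans = (\<lambda>_ _. return_pmf 0),
         weight = (\<lambda>_ \<sigma> _. if \<sigma> = a then 0 else 1)\<rparr>"

lemma wf_A1: "wf_pwa A1" by (simp add: wf_pwa_def A1_def)
lemma wf_A2: "wf_pwa A2" by (simp add: wf_pwa_def A2_def)

lemma L_A1: "L_as A1 LimSupV w = (if (\<forall>N. \<exists>i\<ge>N. w i = a) then 1 else 0)"
proof -
  define f where "f i = (if w i = a then 1 else 0 :: real)" for i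
  have ws: "weight_seq A1 w r = f" for r by (auto simp: weight_seq_def A1_def f_def)
  show ?thesis
  proof (cases "\<forall>N. \<exists>i\<ge>N. w i = a")
    case True
    have "limsup (\<lambda>n. ereal (f n)) = ereal 1"
    proof (rule antisym)
      show "limsup (\<lambda>n. ereal (f n)) \<le> ereal 1" by (rule Limsup_bounded) (simp add: f_def)
      show "ereal 1 \<le> limsup (\<lambda>n. ereal (f n))" by (rule L2) (use True in \<open>auto simp: f_def\<close>)
    qed
    then have "L_as A1 LimSupV w = 1" by (intro L_as_const LimSup_meas) (simp add: ws LimSupV_def)
    then show ?thesis using True by simp
  next
    case False
    then obtain N where N: "\<forall>i\<ge>N. w i = b" using not_inf_a by blast
    have "limsup (\<lambda>n. ereal (f n)) = ereal 0"
    proof (rule antisym)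
      show "limsup (\<lambda>n. ereal (f n)) \<le> ereal 0" by (rule Limsup_bounded) (unfold eventually_sequentially, rule exI[of _ N], use N in \<open>auto simp: f_def\<close>)
      show "ereal 0 \<le> limsup (\<lambda>n. ereal (f n))" by (rule le_Limsup) (auto simp: f_def)
    qed
    then have "L_as A1 LimSupV w = 0" by (intro L_as_const LimSup_meas) (simp add: ws LimSupV_def)
    then show ?thesis using False by simp
  qed
qed

lemma L_A2: "L_pos A2 LimInfV w = (if (\<forall>N. \<exists>i\<ge>N. w i = a) then 0 else 1)"
proof -
  define f where "f i = (if w i = a then 0 else 1 :: real)" for i
  have ws: "weight_seq A2 w r = f" for r by (auto simp: weight_seq_def A2_def f_def)
  show ?thesis
  proof (cases "\<forall>N. \<exists>i\<ge>N. w i = a")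
    case True
    have "liminf (\<lambda>n. ereal (f n)) = ereal 0"
    proof (rule antisym)
      show "liminf (\<lambda>n. ereal (f n)) \<le> ereal 0"
      proof (rule ccontr)
        assume "\<not> liminf (\<lambda>n. ereal (f n)) \<le> ereal 0"
        then have "ereal 0 < liminf (\<lambda>n. ereal (f n))" by simp
        from L3[OF this] obtain N where "\<forall>i\<ge>N. 0 < f i" by blast
        moreover from True obtain i where "i \<ge> N" "w i = a" by blast
        ultimately show False by (auto simp: f_def)
      qed
      show "ereal 0 \<le> liminf (\<lambda>n. ereal (f n))" by (rule Liminf_bounded) (auto simp: f_def)
    qed
    then have "L_pos A2 LimInfV w = 0" by (intro L_pos_const LimInf_meas) (simp add: ws LimInfV_def)
    then show ?thesis using True by simp
  next
    case False
    then obtain N where N: "\<forall>i\<ge>N. w i = b" using not_inf_a by blast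
    have "liminf (\<lambda>n. ereal (f n)) = ereal 1"
    proof (rule antisym)
      show "liminf (\<lambda>n. ereal (f n)) \<le> ereal 1" by (rule Liminf_le) (auto simp: f_def)
      show "ereal 1 \<le> liminf (\<lambda>n. ereal (f n))" by (rule L4) (rule exI[of _ N], use N in \<open>auto simp: f_def\<close>)
    qed
    then have "L_pos A2 LimInfV w = 1" by (intro L_pos_const LimInf_meas) (simp add: ws LimInfV_def)
    then show ?thesis using False by simp
  qed
qed



lemma part1: "wf_pwa B \<Longrightarrow> (\<lambda>w. L_as B LimSupV w) \<noteq> (\<lambda>w. 1 - L_as A1 LimSupV w)"
proof
  assume wf: "wf_pwa B" and eq: "(\<lambda>w. L_as B LimSupV w) = (\<lambda>w. 1 - L_as A1 LimSupV w)"
  define G where "G q \<sigma> q' = (1/2 < real_of_rat (weight B q \<sigma> q'))" for q \<sigma> q'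
  define X where "X v \<omega> = LimSupV (weight_seq B v (runR B v \<omega>))" for v \<omega>
  have eqv: "L_as B LimSupV v = 1 - L_as A1 LimSupV v" for v using fun_cong[OF eq, of v] by simp
  have bnd: "AE \<omega> in Om B. ereal (- wbound B) \<le> X v \<omega> \<and> X v \<omega> \<le> ereal (wbound B)" for v
    using AE_wbound[OF wf, of v] by (rule AE_mp) (rule AE_I2, auto simp: X_def LimSupV_def intro: limsup_bounds)
  have LB: "L_as B LimSupV v = Sup {\<eta>. AE \<omega> in Om B. ereal \<eta> \<le> X v \<omega>}" for v
    unfolding X_def by (rule L_as_AE[OF LimSup_meas])
  have Fr_iff: "\<omega> \<in> Fr B G v \<longleftrightarrow> (\<forall>N. \<exists>i\<ge>N. 1/2 < weight_seq B v (runR B v \<omega>) i)" for v \<omega>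
    by (simp only: Fr_def Ev_def mem_Collect_eq weight_seq_def G_def)
  have hyp: "AE \<omega> in Om B. \<omega> \<in> Fr B G v" if evb: "\<exists>n. \<forall>i\<ge>n. v i = b" for v
  proof -
    have "L_as A1 LimSupV v = 0" using evb not_inf_a[of v] by (simp add: L_A1)
    then have "L_as B LimSupV v = 1" using eqv[of v] by simp
    then have "3/4 < Sup {\<eta>. AE \<omega> in Om B. ereal \<eta> \<le> X v \<omega>}" using LB[of v] by simp
    then have "AE \<omega> in Om B. ereal (3/4) \<le> X v \<omega>" by (rule sup_as(1)[OF prob_Om bnd])
    then show ?thesis
    proof (rule AE_mp, intro AE_I2 impI)
      fix \<omega> assume "ereal (3/4) \<le> X v \<omega>"
      then have "ereal (1/2) < limsup (\<lambda>n. ereal (weight_seq B v (runR B v \<omega>) n))"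
        unfolding X_def LimSupV_def by (rule less_le_trans[rotated]) simp
      from L1[OF this] show "\<omega> \<in> Fr B G v" unfolding Fr_iff .
    qed
  qed
  obtain w where infa: "\<forall>N. \<exists>i\<ge>N. w i = a" and AEw: "AE \<omega> in Om B. \<omega> \<in> Fr B G w"
    using core[OF hyp] by blast
  have "AE \<omega> in Om B. ereal (1/2) \<le> X w \<omega>"
    using AEw
  proof (rule AE_mp, intro AE_I2 impI)
    fix \<omega> assume "\<omega> \<in> Fr B G w"
    then have "\<forall>N. \<exists>i\<ge>N. 1/2 \<le> weight_seq B w (runR B w \<omega>) i" unfolding Fr_iff by (meson less_imp_le)
    then show "ereal (1/2) \<le> X w \<omega>" unfolding X_def LimSupV_def by (rule L2)
  qed
  then have "1/2 \<le> Sup {\<eta>. AE \<omega> in Om B. ereal \<eta> \<le> X w \<omega>}" by (rule sup_as(2)[OF prob_Om bnd])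
  moreover have "L_as B LimSupV w = 0" using eqv[of w] infa by (simp add: L_A1)
  ultimately show False using LB[of w] by simp
qed

lemma part2: "wf_pwa B \<Longrightarrow> (\<lambda>w. L_pos B LimInfV w) \<noteq> (\<lambda>w. 1 - L_pos A2 LimInfV w)"
proof
  assume wf: "wf_pwa B" and eq: "(\<lambda>w. L_pos B LimInfV w) = (\<lambda>w. 1 - L_pos A2 LimInfV w)"
  define G where "G q \<sigma> q' = (real_of_rat (weight B q \<sigma> q') \<le> 1/2)" for q \<sigma> q'
  define Y where "Y v \<omega> = LimInfV (weight_seq B v (runR B v \<omega>))" for v \<omega>
  have eqv: "L_pos B LimInfV v = 1 - L_pos A2 LimInfV v" for v using fun_cong[OF eq, of v] by simp
  have bnd: "AE \<omega> in Om B. ereal (- wbound B) \<le> Y v \<omega> \<and> Y v \<omega> \<le> ereal (wbound B)" for v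
    using AE_wbound[OF wf, of v] by (rule AE_mp) (rule AE_I2, auto simp: Y_def LimInfV_def intro: limsup_bounds)
  have LB: "L_pos B LimInfV v = Sup {\<eta>. \<not> (AE \<omega> in Om B. \<not> ereal \<eta> \<le> Y v \<omega>)}" for v
    unfolding Y_def by (rule L_pos_AE[OF LimInf_meas])
  have Fr_iff: "\<omega> \<in> Fr B G v \<longleftrightarrow> (\<forall>N. \<exists>i\<ge>N. weight_seq B v (runR B v \<omega>) i \<le> 1/2)" for v \<omega>
    by (simp only: Fr_def Ev_def mem_Collect_eq weight_seq_def G_def)
  have notFr: "\<not> ereal c \<le> Y v \<omega>" if "\<omega> \<in> Fr B G v" "1/2 < c" for v \<omega> c
  proof
    assume "ereal c \<le> Y v \<omega>"
    then have "ereal (1/2) < liminf (\<lambda>n. ereal (weight_seq B v (runR B v \<omega>) n))"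
      unfolding Y_def LimInfV_def by (rule less_le_trans[rotated]) (use that in simp)
    from L3[OF this] obtain N where N: "\<forall>i\<ge>N. 1/2 < weight_seq B v (runR B v \<omega>) i" by blast
    from that(1) obtain i where "i \<ge> N" "weight_seq B v (runR B v \<omega>) i \<le> 1/2" unfolding Fr_iff by blast
    with N show False by force
  qed
  have ex: "\<exists>v. (\<exists>n. \<forall>i\<ge>n. v i = b) \<and> \<not> (AE \<omega> in Om B. \<omega> \<in> Fr B G v)"
  proof (rule ccontr)
    assume "\<not> ?thesis"
    then have hyp: "AE \<omega> in Om B. \<omega> \<in> Fr B G v" if "\<exists>n. \<forall>i\<ge>n. v i = b" for v using that by blast
    obtain w where infa: "\<forall>N. \<exists>i\<ge>N. w i = a" and AEw: "AE \<omega> in Om B. \<omega> \<in> Fr B G w"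
      using core[OF hyp] by blast
    have "L_pos B LimInfV w = 1" using eqv[of w] infa by (simp add: L_A2)
    then have "3/4 < Sup {\<eta>. \<not> (AE \<omega> in Om B. \<not> ereal \<eta> \<le> Y w \<omega>)}" using LB[of w] by simp
    then have nAE: "\<not> (AE \<omega> in Om B. \<not> ereal (3/4) \<le> Y w \<omega>)" by (rule sup_pos(1)[OF prob_Om bnd])
    have "AE \<omega> in Om B. \<not> ereal (3/4) \<le> Y w \<omega>"
      using AEw by (rule AE_mp) (rule AE_I2, intro impI notFr, auto)
    with nAE show False by blast
  qed
  then obtain v where evb: "\<exists>n. \<forall>i\<ge>n. v i = b" and nAE: "\<not> (AE \<omega> in Om B. \<omega> \<in> Fr B G v)" by blast
  have "\<not> (AE \<omega> in Om B. \<not> ereal (1/2) \<le> Y v \<omega>)"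
  proof
    assume "AE \<omega> in Om B. \<not> ereal (1/2) \<le> Y v \<omega>"
    then have "AE \<omega> in Om B. \<omega> \<in> Fr B G v"
    proof (rule AE_mp, intro AE_I2 impI)
      fix \<omega> assume nle: "\<not> ereal (1/2) \<le> Y v \<omega>"
      show "\<omega> \<in> Fr B G v"
      proof (rule ccontr)
        assume "\<omega> \<notin> Fr B G v"
        then have "\<not> (\<forall>N. \<exists>i\<ge>N. weight_seq B v (runR B v \<omega>) i \<le> 1/2)" unfolding Fr_iff .
        then obtain N where "\<forall>i\<ge>N. \<not> weight_seq B v (runR B v \<omega>) i \<le> 1/2" by blast
        then have "\<forall>i\<ge>N. 1/2 < weight_seq B v (runR B v \<omega>) i" by (meson not_le)
        then have "\<exists>N. \<forall>i\<ge>N. 1/2 \<le> weight_seq B v (runR B v \<omega>) i" by (meson less_imp_le)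
        then have "ereal (1/2) \<le> Y v \<omega>" unfolding Y_def LimInfV_def by (rule L4)
        with nle show False by simp
      qed
    qed
    with nAE show False by blast
  qed
  then have "1/2 \<le> Sup {\<eta>. \<not> (AE \<omega> in Om B. \<not> ereal \<eta> \<le> Y v \<omega>)}" by (rule sup_pos(2)[OF prob_Om bnd])
  moreover have "L_pos B LimInfV v = 0" using eqv[of v] evb not_inf_a[of v] by (simp add: L_A2)
  ultimately show False using LB[of v] by simp
qed

theorem lemma22:
  shows "(\<exists>A :: ab pwa. wf_pwa A \<and>
            (\<forall>B :: ab pwa. wf_pwa B \<longrightarrow>
               (\<lambda>w. L_as B LimSupV w) \<noteq> (\<lambda>w. 1 - L_as A LimSupV w)))
       \<and> (\<exists>A' :: ab pwa. wf_pwa A' \<and>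
            (\<forall>B' :: ab pwa. wf_pwa B' \<longrightarrow>
               (\<lambda>w. L_pos B' LimInfV w) \<noteq> (\<lambda>w. 1 - L_pos A' LimInfV w)))"
  using wf_A1 wf_A2 part1 part2 by blast


end
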